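(* Let $G=(V,E,w)$ be a connected undirected graph with positive edge weights, $|V|=n$, and weighted Laplacian $\mathbf{L}$. Let $v\in V$ and let $e=\{u,v\}\notin E$, $u\neq v$, be a candidate edge with given weight $w(e)>0$, and set $\mathbf{b}_e=\mathbf{e}_u-\mathbf{e}_v$ (either orientation). Let $\mathcal{R}_v^\Delta(e)=\mathcal{R}_v(G)-\mathcal{R}_v(G+e)$, where $G+e$ is $G$ with edge $e$ of weight $w(e)$ added. Then $$\mathcal{R}_v^\Delta(e)=\frac{w(e)\left(n\left(\mathbf{L}^\dagger\mathbf{b}_e\mathbf{b}_e^\top\mathbf{L}^\dagger\right)_{vv}+\operatorname{Tr}\left(\mathbf{L}^\dagger\mathbf{b}_e\mathbf{b}_e^\top\mathbf{L}^\dagger\right)\right)}{1+w(e)\,\mathbf{b}_e^\top\mathbf{L}^\dagger\mathbf{b}_e}.$$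
   Context: The Laplacian of a weighted graph is $\mathbf{L}=\mathbf{D}-\mathbf{A}$ with $\mathbf{A}$ the weighted adjacency matrix and $\mathbf{D}$ the diagonal weighted degree matrix; $\mathbf{L}^\dagger$ is its Moore–Penrose pseudoinverse; $\mathbf{e}_i$ are standard basis vectors. The resistance distance between nodes $a,b$ is $\mathcal{R}_{ab}=(\mathbf{e}_a-\mathbf{e}_b)^\top\mathbf{L}^\dagger(\mathbf{e}_a-\mathbf{e}_b)$, and the resistance distance of node $v$ in a graph is $\mathcal{R}_v=\sum_{u\in V}\mathcal{R}_{uv}$. *)

theory Defs
  imports "HOL-Analysis.Analysis"
begin

definition weighted_graph :: "('n::finite \<Rightarrow> 'n \<Rightarrow> real) \<Rightarrow> bool" where
  "weighted_graph w \<longleftrightarrow> (\<forall>x y. w x y = w y x) \<and> (\<forall>x y. w x y \<ge> 0) \<and> (\<forall>x. w x x = 0)"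

definition edges :: "('n \<Rightarrow> 'n \<Rightarrow> real) \<Rightarrow> ('n \<times> 'n) set" where
  "edges w = {(x, y). w x y > 0}"

definition connected_graph :: "('n::finite \<Rightarrow> 'n \<Rightarrow> real) \<Rightarrow> bool" where
  "connected_graph w \<longleftrightarrow> (\<forall>x y. (x, y) \<in> (edges w)\<^sup>*)"

definition adj_matrix :: "('n::finite \<Rightarrow> 'n \<Rightarrow> real) \<Rightarrow> real^'n^'n" where
  "adj_matrix w = (\<chi> i j. w i j)"

definition deg_matrix :: "('n::finite \<Rightarrow> 'n \<Rightarrow> real) \<Rightarrow> real^'n^'n" where
  "deg_matrix w = (\<chi> i j. if i = j then (\<Sum>k\<in>UNIV. w i k) else 0)"

definition laplacian :: "('n::finite \<Rightarrow> 'n \<Rightarrow> real) \<Rightarrow> real^'n^'n" where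
  "laplacian w = deg_matrix w - adj_matrix w"

definition pinv :: "real^'n^'m \<Rightarrow> real^'m^'n" where
  "pinv A = (THE X. A ** X ** A = A \<and> X ** A ** X = X \<and>
                    transpose (A ** X) = A ** X \<and> transpose (X ** A) = X ** A)"

definition std_basis :: "'n::finite \<Rightarrow> real^'n" where
  "std_basis i = axis i 1"

definition outer :: "real^'n \<Rightarrow> real^'m \<Rightarrow> real^'m^'n" where
  "outer x y = (\<chi> i j. x $ i * y $ j)"

definition resistance :: "('n::finite \<Rightarrow> 'n \<Rightarrow> real) \<Rightarrow> 'n \<Rightarrow> 'n \<Rightarrow> real" where
  "resistance w a b = (std_basis a - std_basis b) \<bullet>
       (pinv (laplacian w) *v (std_basis a - std_basis b))"

definition node_resistance :: "('n::finite \<Rightarrow> 'n \<Rightarrow> real) \<Rightarrow> 'n \<Rightarrow> real" where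
  "node_resistance w v = (\<Sum>u\<in>UNIV. resistance w u v)"

definition add_edge :: "('n \<Rightarrow> 'n \<Rightarrow> real) \<Rightarrow> 'n \<Rightarrow> 'n \<Rightarrow> real \<Rightarrow> ('n \<Rightarrow> 'n \<Rightarrow> real)" where
  "add_edge w u v c = (\<lambda>x y. if (x = u \<and> y = v) \<or> (x = v \<and> y = u) then c else w x y)"

end

theory Submission imports Defs begin

lemma penrose_eq:
  fixes A :: "real^'n^'m" and X Y :: "real^'m^'n"
  assumes x1: "A ** X ** A = A" and x2: "X ** A ** X = X"
    and x3: "transpose (A ** X) = A ** X" and x4: "transpose (X ** A) = X ** A"
    and y1: "A ** Y ** A = A" and y2: "Y ** A ** Y = Y"
    and y3: "transpose (A ** Y) = A ** Y" and y4: "transpose (Y ** A) = Y ** A"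
  shows "X = Y"
proof -
  have AX: "A ** X = A ** Y"
  proof -
    have "A ** X = transpose X ** transpose A" using x3 by (simp add: matrix_transpose_mul)
    also have "\<dots> = transpose X ** (transpose A ** transpose Y ** transpose A)"
      using y1 by (metis matrix_transpose_mul matrix_mul_assoc)
    also have "\<dots> = transpose (A ** X) ** transpose (A ** Y)"
      by (simp add: matrix_transpose_mul matrix_mul_assoc)
    also have "\<dots> = (A ** X ** A) ** Y" using x3 y3 by (simp add: matrix_mul_assoc)
    finally show ?thesis using x1 by simp
  qed
  have XA: "X ** A = Y ** A"
  proof -
    have "X ** A = transpose A ** transpose X" using x4 by (simp add: matrix_transpose_mul)
    also have "\<dots> = (transpose A ** transpose Y ** transpose A) ** transpose X"
      using y1 by (metis matrix_transpose_mul matrix_mul_assoc)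
    also have "\<dots> = transpose (Y ** A) ** transpose (X ** A)"
      by (simp add: matrix_transpose_mul matrix_mul_assoc)
    also have "\<dots> = Y ** (A ** X ** A)" using x4 y4 by (simp add: matrix_mul_assoc)
    finally show ?thesis using x1 by simp
  qed
  have "X = X ** (A ** Y)" using x2 AX by (metis matrix_mul_assoc)
  also have "\<dots> = Y ** A ** Y" using XA by (simp add: matrix_mul_assoc)
  finally show ?thesis using y2 by simp
qed

lemma pinv_eqI:
  fixes A :: "real^'n^'m" and X :: "real^'m^'n"
  assumes "A ** X ** A = A" and "X ** A ** X = X"
    and "transpose (A ** X) = A ** X" and "transpose (X ** A) = X ** A"
  shows "pinv A = X"
  unfolding pinv_def
  apply (rule the_equality)
  using assms apply blast
  using penrose_eq assms by blast

lemma pinv_eqI2: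
  fixes A X P :: "real^'n^'n"
  assumes "A ** X = P" "X ** A = P" "P ** A = A" "P ** X = X" "transpose P = P"
  shows "pinv A = X"
  apply (rule pinv_eqI)
  using assms by (simp_all add: matrix_mul_assoc[symmetric])


definition onesM :: "real^'n::finite^'n" where "onesM = (\<chi> i j. 1)"

lemma lap_entry: "laplacian w $ i $ j = (if i = j then (\<Sum>k\<in>UNIV. w i k) else 0) - w i j"
  by (simp add: laplacian_def deg_matrix_def adj_matrix_def)

lemma lap_mulv: "(laplacian w *v x) $ i = (\<Sum>k\<in>UNIV. w i k) * x $ i - (\<Sum>j\<in>UNIV. w i j * x $ j)"
proof -
  have "(laplacian w *v x) $ i = (\<Sum>j\<in>UNIV. (if i = j then (\<Sum>k\<in>UNIV. w i k) * x $ j else 0) - w i j * x $ j)"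
    by (auto simp add: matrix_vector_mult_def lap_entry left_diff_distrib intro!: sum.cong)
  also have "\<dots> = (\<Sum>k\<in>UNIV. w i k) * x $ i - (\<Sum>j\<in>UNIV. w i j * x $ j)"
    by (simp add: sum_subtractf)
  finally show ?thesis .
qed

lemma lap_sym:
  assumes "weighted_graph w" shows "transpose (laplacian w) = laplacian w"
  using assms by (simp add: vec_eq_iff transpose_def lap_entry weighted_graph_def)

lemma ones_lap:
  assumes "weighted_graph w" shows "onesM ** laplacian w = 0"
proof -
  have "(\<Sum>k\<in>UNIV. laplacian w $ k $ j) = 0" for j
  proof -
    have "(\<Sum>k\<in>UNIV. laplacian w $ k $ j) = (\<Sum>k\<in>UNIV. (if k = j then (\<Sum>m\<in>UNIV. w k m) else 0)) - (\<Sum>k\<in>UNIV. w k j)"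
      by (simp add: lap_entry sum_subtractf)
    also have "\<dots> = 0" using assms by (simp add: weighted_graph_def)
    finally show ?thesis .
  qed
  then show ?thesis by (simp add: vec_eq_iff onesM_def matrix_matrix_mult_def)
qed

lemma lap_ones:
  assumes "weighted_graph w" shows "laplacian w ** onesM = 0"
proof -
  have "(\<Sum>k\<in>UNIV. laplacian w $ j $ k) = 0" for j
  proof -
    have "(\<Sum>k\<in>UNIV. laplacian w $ j $ k) = (\<Sum>k\<in>UNIV. (if j = k then (\<Sum>m\<in>UNIV. w j m) else 0)) - (\<Sum>k\<in>UNIV. w j k)"
      by (simp add: lap_entry sum_subtractf)
    also have "\<dots> = 0" by simp
    finally show ?thesis .
  qed
  then show ?thesis by (simp add: vec_eq_iff onesM_def matrix_matrix_mult_def)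
qed

lemma ones_ones: "(onesM :: real^'n::finite^'n) ** onesM = real CARD('n) *\<^sub>R onesM"
  by (simp add: vec_eq_iff onesM_def matrix_matrix_mult_def)

lemma transpose_ones[simp]: "transpose onesM = onesM"
  by (simp add: vec_eq_iff onesM_def transpose_def)

lemma quad:
  assumes "weighted_graph w"
  shows "x \<bullet> (laplacian w *v x) = (\<Sum>i\<in>UNIV. \<Sum>j\<in>UNIV. w i j * (x$i - x$j)^2) / 2"
proof -
  have S: "x \<bullet> (laplacian w *v x) = (\<Sum>i\<in>UNIV. \<Sum>j\<in>UNIV. w i j * (x$i * (x$i - x$j)))"
    by (simp add: inner_vec_def lap_mulv sum_distrib_left sum_distrib_right right_diff_distrib
        sum_subtractf algebra_simps)
  have "(\<Sum>i\<in>UNIV. \<Sum>j\<in>UNIV. w i j * (x$i * (x$i - x$j)))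
      = (\<Sum>j\<in>UNIV. \<Sum>i\<in>UNIV. w i j * (x$i * (x$i - x$j)))"
    by (rule sum.swap)
  also have "\<dots> = (\<Sum>i\<in>UNIV. \<Sum>j\<in>UNIV. w i j * (x$j * (x$j - x$i)))"
    using assms by (simp add: weighted_graph_def)
  finally have T: "(\<Sum>i\<in>UNIV. \<Sum>j\<in>UNIV. w i j * (x$i * (x$i - x$j)))
      = (\<Sum>i\<in>UNIV. \<Sum>j\<in>UNIV. w i j * (x$j * (x$j - x$i)))" .
  have "(\<Sum>i\<in>UNIV. \<Sum>j\<in>UNIV. w i j * (x$i - x$j)^2)
     = (\<Sum>i\<in>UNIV. \<Sum>j\<in>UNIV. w i j * (x$i * (x$i - x$j))) + (\<Sum>i\<in>UNIV. \<Sum>j\<in>UNIV. w i j * (x$j * (x$j - x$i)))"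
    by (simp add: sum.distrib[symmetric] power2_eq_square algebra_simps)
  then show ?thesis using S T by simp
qed

lemma quad_nonneg:
  assumes "weighted_graph w" shows "x \<bullet> (laplacian w *v x) \<ge> 0"
  unfolding quad[OF assms]
  using assms by (auto simp: weighted_graph_def intro!: sum_nonneg divide_nonneg_nonneg)

lemma ker_const:
  assumes wg: "weighted_graph w" and cg: "connected_graph w" and L: "laplacian w *v x = 0"
  shows "x $ a = x $ b"
proof -
  have nn: "\<And>i j. w i j * (x$i - x$j)^2 \<ge> 0" using wg by (simp add: weighted_graph_def)
  have "(\<Sum>i\<in>UNIV. \<Sum>j\<in>UNIV. w i j * (x$i - x$j)^2) = 0"
    using quad[OF wg, of x] L by simp
  then have z: "\<forall>i\<in>UNIV. (\<Sum>j\<in>UNIV. w i j * (x$i - x$j)^2) = 0"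
    by (subst (asm) sum_nonneg_eq_0_iff) (auto intro: sum_nonneg nn)
  have e: "x $ i = x $ j" if "(i, j) \<in> edges w" for i j
  proof -
    have "\<forall>j\<in>UNIV. w i j * (x$i - x$j)^2 = 0"
      using z by (subst (asm) sum_nonneg_eq_0_iff) (auto intro: nn)
    then have "w i j * (x$i - x$j)^2 = 0" by simp
    moreover have "w i j > 0" using that by (simp add: edges_def)
    ultimately show ?thesis by simp
  qed
  have "(a, b) \<in> (edges w)\<^sup>*" using cg by (simp add: connected_graph_def)
  then show ?thesis
    by (induction rule: rtrancl_induct) (auto dest: e)
qed


lemma mm_diff_l: "(A::real^'n^'m) ** (B - C) = A ** B - A ** C"
  by (simp add: matrix_matrix_mult_def vec_eq_iff sum_subtractf algebra_simps)
lemma mm_diff_r: "((A::real^'n^'m) - B) ** C = A ** C - B ** C"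
  by (simp add: matrix_matrix_mult_def vec_eq_iff sum_subtractf algebra_simps)
lemma mm_add_r: "((A::real^'n^'m) + B) ** C = A ** C + B ** C"
  by (simp add: matrix_matrix_mult_def vec_eq_iff sum.distrib algebra_simps)
lemma mm_scale_l: "(k *\<^sub>R (A::real^'n^'m)) ** C = k *\<^sub>R (A ** C)"
  by (simp add: scalar_matrix_assoc)
lemma mm_scale_r: "(A::real^'n^'m) ** (k *\<^sub>R C) = k *\<^sub>R (A ** C)"
  by (simp add: matrix_scalar_ac scalar_matrix_assoc)
lemma transpose_add: "transpose ((A::real^'n^'m) + B) = transpose A + transpose B"
  by (simp add: transpose_def vec_eq_iff)
lemma transpose_diff: "transpose ((A::real^'n^'m) - B) = transpose A - transpose B"
  by (simp add: transpose_def vec_eq_iff)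

lemmas mm_simps = mm_diff_l mm_diff_r mm_add_r matrix_add_ldistrib mm_scale_l mm_scale_r

lemma pinv_struct:
  fixes w :: "'n::finite \<Rightarrow> 'n \<Rightarrow> real"
  assumes wg: "weighted_graph w" and cg: "connected_graph w"
  defines "P \<equiv> mat 1 - (1 / real CARD('n)) *\<^sub>R (onesM :: real^'n^'n)"
  shows "\<exists>X. laplacian w ** X = P \<and> X ** laplacian w = P \<and> transpose X = X
           \<and> onesM ** X = 0 \<and> X ** onesM = 0"
proof -
  define L where "L = laplacian w"
  define J where "J = (onesM :: real^'n^'n)"
  define n where "n = real CARD('n)"
  have npos: "n > 0" by (simp add: n_def)
  define M where "M = L + (1/n) *\<^sub>R J"
  have JL: "J ** L = 0" and LJ: "L ** J = 0" using ones_lap[OF wg] lap_ones[OF wg]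
    by (simp_all add: J_def L_def)
  have JJ: "J ** J = n *\<^sub>R J" by (simp add: J_def n_def ones_ones)
  have JM: "J ** M = J" using JL JJ npos by (simp add: M_def mm_simps)
  have MJ: "M ** J = J" using LJ JJ npos by (simp add: M_def mm_simps)
  have ker: "x = 0" if "M *v x = 0" for x
  proof -
    have "J *v x = (J ** M) *v x" using JM by simp
    also have "\<dots> = 0" using that by (simp flip: matrix_vector_mul_assoc)
    finally have Jx: "J *v x = 0" .
    have "L *v x = M *v x - (1/n) *\<^sub>R (J *v x)"
      by (simp add: M_def matrix_vector_mult_add_rdistrib scaleR_matrix_vector_assoc)
    with that Jx have Lx: "L *v x = 0" by simp
    fix a
    have c: "x $ i = x $ a" for i using ker_const[OF wg cg, of x i a] Lx by (simp add: L_def)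
    have "(J *v x) $ a = (\<Sum>j\<in>UNIV. x $ j)" by (simp add: J_def onesM_def matrix_vector_mult_def)
    also have "\<dots> = (\<Sum>j\<in>(UNIV::'n set). x $ a)" using c by (metis (no_types))
    also have "\<dots> = n * x $ a" by (simp add: n_def)
    finally have "x $ a = 0" using Jx npos by simp
    then show ?thesis using c by (simp add: vec_eq_iff)
  qed
  then obtain Z where ZM: "Z ** M = mat 1"
    using matrix_left_invertible_ker[of M] by blast
  then have MZ: "M ** Z = mat 1" using matrix_left_right_inverse by blast
  have JZ: "J ** Z = J" using JM MZ by (metis matrix_mul_assoc matrix_mul_rid)
  have ZJ: "Z ** J = J" using MJ ZM by (metis matrix_mul_assoc matrix_mul_lid)
  have LM: "L = M - (1/n) *\<^sub>R J" by (simp add: M_def)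
  define X where "X = Z - (1/n) *\<^sub>R J"
  have LX: "L ** X = P"
    unfolding X_def P_def J_def[symmetric] n_def[symmetric]
    by (simp add: mm_simps LJ) (simp add: LM mm_simps MZ JZ)
  have XL: "X ** L = P"
    unfolding X_def P_def J_def[symmetric] n_def[symmetric]
    by (simp add: mm_simps JL) (simp add: LM mm_simps ZM ZJ)
  have JX: "J ** X = 0" using npos by (simp add: X_def mm_simps JZ JJ)
  have XJ: "X ** J = 0" using npos by (simp add: X_def mm_simps ZJ JJ)
  have tM: "transpose M = M" using lap_sym[OF wg]
    by (simp add: M_def transpose_add transpose_scalar J_def L_def)
  have "transpose Z ** M = mat 1" using MZ tM by (metis matrix_transpose_mul transpose_mat)
  then have tZ: "transpose Z = Z" using MZ by (metis matrix_mul_assoc matrix_mul_lid matrix_mul_rid)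
  have "transpose X = X" by (simp add: X_def transpose_diff transpose_scalar tZ J_def)
  then show ?thesis using LX XL JX XJ by (auto simp: L_def J_def)
qed


lemma std_basis_nth: "std_basis i $ j = (if j = i then 1 else 0)"
  by (simp add: std_basis_def axis_def)

lemma lap_add:
  assumes wg: "weighted_graph w" and ne: "(u, v) \<notin> edges w" and uv: "u \<noteq> v"
  shows "laplacian (add_edge w u v c) = laplacian w + c *\<^sub>R outer (std_basis u - std_basis v) (std_basis u - std_basis v)"
proof -
  have w0: "w u v = 0" "w v u = 0" using wg ne by (auto simp: weighted_graph_def edges_def not_less intro: antisym)
  have ae: "add_edge w u v c i k = w i k + (if (i = u \<and> k = v) \<or> (i = v \<and> k = u) then c else 0)" for i k
    using w0 by (auto simp: add_edge_def)
  have deg: "(\<Sum>k\<in>UNIV. add_edge w u v c i k) = (\<Sum>k\<in>UNIV. w i k) + (if i = u \<or> i = v then c else 0)" for i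
  proof -
    have "(\<Sum>k\<in>UNIV. add_edge w u v c i k) = (\<Sum>k\<in>UNIV. w i k) + (\<Sum>k\<in>UNIV. (if (i = u \<and> k = v) \<or> (i = v \<and> k = u) then c else 0))"
      unfolding ae by (rule sum.distrib)
    also have "(\<Sum>k\<in>UNIV. (if (i = u \<and> k = v) \<or> (i = v \<and> k = u) then c else 0)) = (if i = u \<or> i = v then c else 0)"
      using uv by auto
    finally show ?thesis .
  qed
  show ?thesis
    using uv by (simp add: vec_eq_iff lap_entry deg) (auto simp: outer_def std_basis_nth ae)
qed

lemma node_res:
  fixes w :: "'n::finite \<Rightarrow> 'n \<Rightarrow> real"
  assumes p: "pinv (laplacian w) = Y" and t: "transpose Y = Y" and J: "onesM ** Y = 0"
  shows "node_resistance w v = trace Y + real CARD('n) * Y $ v $ v"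
proof -
  have e: "std_basis a \<bullet> (Y *v std_basis b) = Y $ a $ b" for a b
    by (simp add: inner_vec_def matrix_vector_mult_def std_basis_nth if_distrib if_distribR cong: if_cong)
  have r: "resistance w a v = Y $ a $ a + Y $ v $ v - 2 * Y $ a $ v" for a
  proof -
    have "Y $ v $ a = Y $ a $ v" using t by (metis transpose_def vec_lambda_beta)
    then show ?thesis
      by (simp add: resistance_def p inner_diff_left inner_diff_right matrix_vector_mult_diff_distrib e)
  qed
  have cs: "(\<Sum>a\<in>UNIV. Y $ a $ v) = 0"
  proof -
    have "(onesM ** Y) $ v $ v = (\<Sum>a\<in>UNIV. Y $ a $ v)"
      by (simp add: onesM_def matrix_matrix_mult_def)
    then show ?thesis using J by simp
  qed
  show ?thesis
    unfolding node_resistance_def r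
    by (simp add: sum.distrib sum_subtractf trace_def cs sum_distrib_left[symmetric])
qed


lemma trace_scale: "trace (k *\<^sub>R (A::real^'n^'n)) = k * trace A"
  by (simp add: trace_def sum_distrib_left)

theorem lemma2:
  fixes w :: "'n::finite \<Rightarrow> 'n \<Rightarrow> real" and u v :: 'n and c :: real
  assumes "weighted_graph w" and "connected_graph w"
    and "u \<noteq> v" and "(u, v) \<notin> edges w" and "c > 0"
  shows "let L = laplacian w; b = std_basis u - std_basis v;
             M = pinv L ** outer b b ** pinv L
         in node_resistance w v - node_resistance (add_edge w u v c) v
            = c * (real CARD('n) * M $ v $ v + trace M) / (1 + c * (b \<bullet> (pinv L *v b)))"
proof -
  note wg = assms(1) and cg = assms(2) and uv = assms(3) and ne = assms(4) and cpos = assms(5)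
  define n where "n = real CARD('n)"
  have npos: "n > 0" by (simp add: n_def)
  define J where "J = (onesM :: real^'n^'n)"
  define P where "P = mat 1 - (1 / n) *\<^sub>R J"
  define L where "L = laplacian w"
  define b where "b = std_basis u - std_basis v"
  define B where "B = outer b b"
  obtain X where LX: "L ** X = P" and XL: "X ** L = P" and tX: "transpose X = X"
    and JX: "J ** X = 0" and XJ: "X ** J = 0"
    using pinv_struct[OF wg cg] unfolding P_def J_def L_def n_def by blast
  have JL: "J ** L = 0" using ones_lap[OF wg] by (simp add: J_def L_def)
  have JJ: "J ** J = n *\<^sub>R J" by (simp add: J_def n_def ones_ones)
  have tP: "transpose P = P" by (simp add: P_def transpose_diff transpose_scalar J_def)
  have PL: "P ** L = L" by (simp add: P_def mm_simps JL)
  have PX: "P ** X = X" by (simp add: P_def mm_simps JX)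
  have pX: "pinv L = X" by (rule pinv_eqI2[OF LX XL PL PX tP])
  have sb: "(\<Sum>k\<in>UNIV. b $ k) = 0"
    by (simp add: b_def std_basis_nth sum_subtractf)
  have JB: "J ** B = 0"
    by (simp add: vec_eq_iff J_def onesM_def B_def outer_def matrix_matrix_mult_def
        sum_distrib_right[symmetric] sb)
  have BJ: "B ** J = 0"
    by (simp add: vec_eq_iff J_def onesM_def B_def outer_def matrix_matrix_mult_def
        sum_distrib_left[symmetric] sb)
  have tB: "transpose B = B" by (simp add: vec_eq_iff transpose_def B_def outer_def mult.commute)
  have PB: "P ** B = B" by (simp add: P_def mm_simps JB)
  have BP: "B ** P = B" by (simp add: P_def mm_simps BJ)
  define s where "s = b \<bullet> (X *v b)"
  have BXB: "B ** X ** B = s *\<^sub>R B"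
    apply (simp add: vec_eq_iff B_def outer_def matrix_matrix_mult_def s_def inner_vec_def
        matrix_vector_mult_def sum_distrib_left sum_distrib_right algebra_simps)
    by (intro allI, subst sum.swap) (simp add: mult_ac)
  have s0: "s \<ge> 0"
  proof -
    have XLX: "X ** L ** X = X" using XL PX by simp
    have "s = b \<bullet> (X *v (L *v (X *v b)))"
      unfolding s_def by (metis matrix_vector_mul_assoc XLX matrix_mul_assoc)
    also have "\<dots> = (X *v b) \<bullet> (L *v (X *v b))"
      by (metis dot_lmul_matrix tX transpose_matrix_vector)
    also have "\<dots> \<ge> 0" unfolding L_def by (rule quad_nonneg[OF wg])
    finally show ?thesis .
  qed
  have den: "1 + c * s > 0" using s0 cpos by (simp add: add_pos_nonneg)
  define k where "k = c / (1 + c * s)"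
  have kk0: "k * (1 + c * s) = c" using den by (simp add: k_def)
  have kk: "k + c * k * s = c" using kk0 by (simp add: algebra_simps)
  define Y where "Y = X - k *\<^sub>R (X ** B ** X)"
  define L' where "L' = laplacian (add_edge w u v c)"
  have L'eq: "L' = L + c *\<^sub>R B" unfolding L'_def L_def B_def b_def by (rule lap_add[OF wg ne uv])
  have E1: "L' ** Y = P + (c - (k + c * k * s)) *\<^sub>R (B ** X)"
    by (simp add: L'eq Y_def mm_simps matrix_mul_assoc LX PB BXB algebra_simps)
  have XBXL: "X ** B ** X ** L = X ** B" using XL BP by (metis matrix_mul_assoc)
  have XBXB: "X ** B ** X ** B = s *\<^sub>R (X ** B)" using BXB
    by (metis matrix_mul_assoc mm_scale_r)
  have E2: "Y ** L' = P + (c - (k + c * k * s)) *\<^sub>R (X ** B)"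
    by (simp add: L'eq Y_def mm_simps matrix_mul_assoc XL XBXL XBXB algebra_simps)
  have L'Y: "L' ** Y = P" using E1 kk by simp
  have YL': "Y ** L' = P" using E2 kk by simp
  have PL': "P ** L' = L'" by (simp add: L'eq mm_simps PL PB)
  have PY: "P ** Y = Y" by (simp add: Y_def mm_simps matrix_mul_assoc PX)
  have pY: "pinv L' = Y" by (rule pinv_eqI2[OF L'Y YL' PL' PY tP])
  have tM: "transpose (X ** B ** X) = X ** B ** X"
    by (simp add: matrix_transpose_mul tX tB matrix_mul_assoc)
  have tY: "transpose Y = Y" by (simp add: Y_def transpose_diff transpose_scalar tX tM)
  have JY: "J ** Y = 0" by (simp add: Y_def mm_simps matrix_mul_assoc JX)
  have r1: "node_resistance w v = trace X + n * X $ v $ v"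
    using node_res[of w X v] pX tX JX by (simp add: L_def J_def n_def)
  have r2: "node_resistance (add_edge w u v c) v = trace Y + n * Y $ v $ v"
    using node_res[of "add_edge w u v c" Y v] pY tY JY by (simp add: L'_def J_def n_def)
  have "node_resistance w v - node_resistance (add_edge w u v c) v
        = k * (n * (X ** B ** X) $ v $ v + trace (X ** B ** X))"
    unfolding r1 r2 by (simp add: Y_def trace_sub trace_scale algebra_simps)
  also have "\<dots> = c * (n * (X ** B ** X) $ v $ v + trace (X ** B ** X)) / (1 + c * s)"
    by (simp add: k_def)
  finally show ?thesis
    unfolding Let_def by (simp add: pX[unfolded L_def] B_def[symmetric] b_def[symmetric] n_def[symmetric]
       s_def[symmetric])
qed

end
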